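(* Let $\epsilon\in(0,1]$, $\gamma>0$, $N\ge2$. For $x\in V$ let $\vec p_x=(\hat p((x,0),(L,0)),\hat p((x,0),(L,1)),\hat p((x,0),(R,0)),\hat p((x,0),(R,1)))^T$ and $\vec q_x=(\hat p((x,1),(L,0)),\hat p((x,1),(L,1)),\hat p((x,1),(R,0)),\hat p((x,1),(R,1)))^T$. Then the matrix $M_\epsilon$ is invertible and, for all $x\in V$, $$\vec p_x=\vec c_1x+\vec c_2+\epsilon(\vec c_3\alpha_1^x+\vec c_4\alpha_2^x),\qquad \vec q_x=\vec c_1x+\vec c_2-(\vec c_3\alpha_1^x+\vec c_4\alpha_2^x).$$
   Context: $V=\{1,\dots,N\}$. Absorption probabilities: consider the continuous-time Markov chain on $(V\times\{0,1\})\cup\{(L,0),(L,1),(R,0),(R,1)\}$ in which the last four states are absorbing, and from $(x,0)$ it jumps to $(x\pm1,0)$ at rate $1$ each (whenever $x\pm1\in V$), from $(x,1)$ to $(x\pm1,1)$ at rate $\epsilon$ each (whenever $x\pm1\in V$), from $(x,i)$ to $(x,1-i)$ at rate $\gamma$, from $(1,i)$ to $(L,i)$ at rate $1$, and from $(N,i)$ to $(R,i)$ at rate $1$. $\hat p((x,i),(\beta,j))$ denotes the probability that this chain started at $(x,i)$ is eventually absorbed at $(\beta,j)$. Let $\alpha_1<\alpha_2$ be the two roots of $\epsilon\alpha^2-(\gamma(1+\epsilon)+2\epsilon)\alpha+\epsilon=0$, i.e. $\alpha_{1,2}=1+\frac\gamma2(1+\frac1\epsilon)\mp\sqrt{[1+\frac\gamma2(1+\frac1\epsilon)]^2-1}$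 (so $\alpha_1\alpha_2=1$). Let $$M_\epsilon=\begin{pmatrix}0&1&\epsilon&\epsilon\\ 1-\epsilon&1&(\epsilon-1)\alpha_1-\epsilon&(\epsilon-1)\alpha_2-\epsilon\\ N+1&1&\epsilon\alpha_1^{N+1}&\epsilon\alpha_2^{N+1}\\ N+\epsilon&1&-\alpha_1^N(\epsilon\alpha_1+1-\epsilon)&-\alpha_2^N(\epsilon\alpha_2+1-\epsilon)\end{pmatrix},$$ and for $k\in\{1,2,3,4\}$ let $\vec c_k=(M_\epsilon^{-1})^T\vec e_k\in\mathbb R^4$ (the transpose of the $k$-th row of $M_\epsilon^{-1}$), $\vec e_k$ the standard basis vectors. *)

theory Defs
  imports "HOL-Analysis.Analysis"
begin

text \<open>States of the chain: transient states (x,i) with x in V = {1..N}, i in {0,1},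
  and the four absorbing states (L,i), (R,i).\<close>
datatype state = S nat nat | Lst nat | Rst nat

definition states :: "nat \<Rightarrow> state set" where
  "states N = {S x i | x i. x \<in> {1..N} \<and> i \<in> {0,1}} \<union> {Lst 0, Lst 1, Rst 0, Rst 1}"

fun rate :: "real \<Rightarrow> real \<Rightarrow> nat \<Rightarrow> state \<Rightarrow> state \<Rightarrow> real" where
  "rate eps gam N (S x i) (S y j) =
     (if j = i \<and> (y = x + 1 \<or> y + 1 = x) \<and> y \<in> {1..N} then (if i = 0 then 1 else eps)
      else if j = 1 - i \<and> y = x then gam else 0)"
| "rate eps gam N (S x i) (Lst j) = (if j = i \<and> x = 1 then 1 else 0)"
| "rate eps gam N (S x i) (Rst j) = (if j = i \<and> x = N then 1 else 0)"
| "rate eps gam N (Lst i) t = 0"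
| "rate eps gam N (Rst i) t = 0"

definition absorbing :: "state \<Rightarrow> bool" where
  "absorbing s = (case s of S _ _ \<Rightarrow> False | _ \<Rightarrow> True)"

definition jump :: "real \<Rightarrow> real \<Rightarrow> nat \<Rightarrow> state \<Rightarrow> state \<Rightarrow> real" where
  "jump eps gam N s t =
     (if absorbing s then (if s = t then 1 else 0)
      else rate eps gam N s t / (\<Sum>u\<in>states N. rate eps gam N s u))"

fun nstep :: "real \<Rightarrow> real \<Rightarrow> nat \<Rightarrow> nat \<Rightarrow> state \<Rightarrow> state \<Rightarrow> real" where
  "nstep eps gam N 0 s t = (if s = t then 1 else 0)"
| "nstep eps gam N (Suc n) s t = (\<Sum>u\<in>states N. jump eps gam N s u * nstep eps gam N n u t)"

text \<open>Absorption probability \<open>p_hat s t\<close>: since t is absorbing, the probability of being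
  eventually absorbed at t equals the limit of the probability of being at t after n jumps
  (the CTMC and its jump chain visit the same sequence of states).\<close>
definition p_hat :: "real \<Rightarrow> real \<Rightarrow> nat \<Rightarrow> state \<Rightarrow> state \<Rightarrow> real" where
  "p_hat eps gam N s t = lim (\<lambda>n. nstep eps gam N n s t)"

definition alpha1 :: "real \<Rightarrow> real \<Rightarrow> real" where
  "alpha1 eps gam = 1 + gam/2 * (1 + 1/eps) - sqrt ((1 + gam/2 * (1 + 1/eps))^2 - 1)"

definition alpha2 :: "real \<Rightarrow> real \<Rightarrow> real" where
  "alpha2 eps gam = 1 + gam/2 * (1 + 1/eps) + sqrt ((1 + gam/2 * (1 + 1/eps))^2 - 1)"

text \<open>Selecting by index of type 4: the elements are 1,2,3 and 4 (= 0).\<close>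
definition sel4 :: "4 \<Rightarrow> 'a \<Rightarrow> 'a \<Rightarrow> 'a \<Rightarrow> 'a \<Rightarrow> 'a" where
  "sel4 k a b c d = (if k = 1 then a else if k = 2 then b else if k = 3 then c else d)"

definition Meps :: "real \<Rightarrow> real \<Rightarrow> nat \<Rightarrow> real^4^4" where
  "Meps eps gam N = (let a1 = alpha1 eps gam; a2 = alpha2 eps gam in
     \<chi> r c. sel4 r
       (sel4 c 0 1 eps eps)
       (sel4 c (1 - eps) 1 ((eps - 1) * a1 - eps) ((eps - 1) * a2 - eps))
       (sel4 c (real N + 1) 1 (eps * a1 ^ (N + 1)) (eps * a2 ^ (N + 1)))
       (sel4 c (real N + eps) 1 (- (a1 ^ N * (eps * a1 + 1 - eps))) (- (a2 ^ N * (eps * a2 + 1 - eps)))))"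

definition cvec :: "real \<Rightarrow> real \<Rightarrow> nat \<Rightarrow> 4 \<Rightarrow> real^4" where
  "cvec eps gam N k = transpose (matrix_inv (Meps eps gam N)) *v axis k 1"

definition target :: "4 \<Rightarrow> state" where
  "target m = sel4 m (Lst 0) (Lst 1) (Rst 0) (Rst 1)"

definition pvec :: "real \<Rightarrow> real \<Rightarrow> nat \<Rightarrow> nat \<Rightarrow> nat \<Rightarrow> real^4" where
  "pvec eps gam N i x = (\<chi> m. p_hat eps gam N (S x i) (target m))"

end

theory Submission
  imports Defs
begin

definition trS :: "nat \<Rightarrow> state set" where
  "trS N = {S x i | x i. x \<in> {1..N} \<and> i \<in> {0,1}}"
definition absS :: "state set" where
  "absS = {Lst 0, Lst 1, Rst 0, Rst 1}"

lemma states_split: "states N = trS N \<union> absS"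
  by (simp add: states_def trS_def absS_def)
lemma trS_img: "trS N = (\<lambda>(x,i). S x i) ` ({1..N} \<times> {0,1})"
  by (auto simp: trS_def)
lemma finite_trS[simp]: "finite (trS N)"
  by (simp add: trS_img)
lemma finite_absS[simp]: "finite absS"
  by (simp add: absS_def)
lemma finite_states[simp]: "finite (states N)"
  by (simp add: states_split)
lemma disj_tr_abs: "trS N \<inter> absS = {}"
  by (auto simp: trS_def absS_def)

lemma sum_states: "(\<Sum>u\<in>states N. f u) = (\<Sum>u\<in>trS N. f u) + (\<Sum>u\<in>absS. f u)"
  unfolding states_split by (rule sum.union_disjoint) (auto simp: disj_tr_abs)

lemma sum_trS: "(\<Sum>u\<in>trS N. f u) = (\<Sum>y=1..N. f (S y 0) + f (S y 1))"
proof -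
  have inj: "inj_on (\<lambda>(x,i). S x i) ({1..N} \<times> {0::nat,1})" by (auto simp: inj_on_def)
  have "(\<Sum>u\<in>trS N. f u) = (\<Sum>(y,j)\<in>{1..N} \<times> {0::nat,1}. f (S y j))"
    unfolding trS_img sum.reindex[OF inj] by (simp add: case_prod_unfold)
  also have "\<dots> = (\<Sum>y=1..N. \<Sum>j\<in>{0::nat,1}. f (S y j))"
    by (rule sum.cartesian_product[symmetric])
  finally show ?thesis by simp
qed

lemma sum_abs_rate:
  assumes "i \<le> 1"
  shows "(\<Sum>u\<in>absS. rate eps gam N (S x i) u * F u) =
     (if x = 1 then F (Lst i) else 0) + (if x = N then F (Rst i) else 0)"
  using assms by (cases i) (auto simp: absS_def)

lemma sum_tr_rate:
  assumes x: "1 \<le> x" "x \<le> N" and i: "i \<le> 1"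
  shows "(\<Sum>u\<in>trS N. rate eps gam N (S x i) u * F u) =
     (if 1 < x then (if i = 0 then 1 else eps) * F (S (x-1) i) else 0)
   + (if x < N then (if i = 0 then 1 else eps) * F (S (x+1) i) else 0)
   + gam * F (S x (1-i))"
proof -
  let ?r = "(if i = 0 then 1 else eps)"
  have g: "rate eps gam N (S x i) (S y 0) * F (S y 0) + rate eps gam N (S x i) (S y 1) * F (S y 1)
     = (if y = x - 1 then (if 1 < x then ?r * F (S (x-1) i) else 0) else 0)
     + (if y = x + 1 then ?r * F (S (x+1) i) else 0) + (if y = x then gam * F (S x (1-i)) else 0)"
    if y: "y \<in> {1..N}" for y
    using x i y by (cases i) auto
  have "(\<Sum>u\<in>trS N. rate eps gam N (S x i) u * F u) = (\<Sum>y=1..N.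
     (if y = x - 1 then (if 1 < x then ?r * F (S (x-1) i) else 0) else 0)
     + (if y = x + 1 then ?r * F (S (x+1) i) else 0) + (if y = x then gam * F (S x (1-i)) else 0))"
    unfolding sum_trS by (rule sum.cong) (use g in auto)
  also have "\<dots> = (if 1 < x then ?r * F (S (x-1) i) else 0)
   + (if x < N then ?r * F (S (x+1) i) else 0) + gam * F (S x (1-i))"
    using x by (simp only: sum.distrib sum.delta finite_atLeastAtMost) auto
  finally show ?thesis .
qed

lemma sum_rate:
  assumes x: "1 \<le> x" "x \<le> N" and i: "i \<le> 1"
  shows "(\<Sum>u\<in>states N. rate eps gam N (S x i) u * F u) =
     (if 1 < x then (if i = 0 then 1 else eps) * F (S (x-1) i) else F (Lst i))
   + (if x < N then (if i = 0 then 1 else eps) * F (S (x+1) i) else F (Rst i))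
   + gam * F (S x (1-i))"
  unfolding sum_states sum_tr_rate[OF x i] sum_abs_rate[OF i] using x by auto

lemma trS_iff: "S x i \<in> trS N \<longleftrightarrow> 1 \<le> x \<and> x \<le> N \<and> i \<le> 1"
  by (auto simp: trS_def)
lemma trS_E: assumes "s \<in> trS N" obtains x i where "s = S x i" "1 \<le> x" "x \<le> N" "i \<le> 1"
  using assms by (auto simp: trS_def)

context
  fixes eps gam :: real and N :: nat
  assumes eps: "0 < eps" "eps \<le> 1" and gam: "0 < gam" and N2: "2 \<le> N"
begin

lemma rate_nonneg: "0 \<le> rate eps gam N s u"
  using eps gam by (cases s; cases u) auto

definition R :: "state \<Rightarrow> real" where "R s = (\<Sum>u\<in>states N. rate eps gam N s u)"

lemma R_bounds: assumes "s \<in> trS N" shows "gam \<le> R s" "R s \<le> 2 + gam"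
proof -
  obtain x i where s: "s = S x i" "1 \<le> x" "x \<le> N" "i \<le> 1" using assms by (rule trS_E)
  have "R s = (if 1 < x then (if i = 0 then 1 else eps) else 1)
   + (if x < N then (if i = 0 then 1 else eps) else 1) + gam"
    unfolding R_def using sum_rate[OF s(2,3,4), of eps gam "\<lambda>_. 1"] s(1) by simp
  then show "gam \<le> R s" "R s \<le> 2 + gam" using eps by auto
qed

lemma jump_nonneg: "0 \<le> jump eps gam N s u"
  unfolding jump_def R_def[symmetric]
  by (auto intro!: divide_nonneg_nonneg sum_nonneg rate_nonneg simp: R_def)

lemma nstep_nonneg: "0 \<le> nstep eps gam N n s u"
  by (induction n arbitrary: s) (auto intro!: sum_nonneg mult_nonneg_nonneg jump_nonneg)

lemma jump_tr: "s \<in> trS N \<Longrightarrow> jump eps gam N s u = rate eps gam N s u / R s"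
  by (auto simp: jump_def R_def absorbing_def trS_def)

lemma jump_abs: "s \<in> absS \<Longrightarrow> jump eps gam N s u = (if s = u then 1 else 0)"
  by (auto simp: jump_def absorbing_def absS_def)

definition harm :: "(state \<Rightarrow> real) \<Rightarrow> bool" where
  "harm g \<longleftrightarrow> (\<forall>s\<in>trS N. (\<Sum>u\<in>states N. rate eps gam N s u * (g u - g s)) = 0)"

lemma harm_jump:
  assumes h: "harm g" and s: "s \<in> states N"
  shows "(\<Sum>u\<in>states N. jump eps gam N s u * g u) = g s"
proof (cases "s \<in> trS N")
  case True
  have Rp: "R s > 0" using R_bounds(1)[OF True] gam by linarith
  have "(\<Sum>u\<in>states N. rate eps gam N s u * (g u - g s)) = 0" using h True by (simp add: harm_def)
  moreover have "(\<Sum>u\<in>states N. rate eps gam N s u * (g u - g s)) = (\<Sum>u\<in>states N. rate eps gam N s u * g u) - g s * R s"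
    unfolding R_def sum_distrib_left sum_subtractf[symmetric] by (rule sum.cong) (auto simp: algebra_simps)
  ultimately have "(\<Sum>u\<in>states N. rate eps gam N s u * g u) = g s * R s" by simp
  then show ?thesis using Rp True
    by (simp add: jump_tr sum_divide_distrib[symmetric])
next
  case False
  then have "s \<in> absS" using s by (simp add: states_split)
  then have "(\<Sum>u\<in>states N. jump eps gam N s u * g u) = (\<Sum>u\<in>states N. if s = u then g s else 0)"
    by (intro sum.cong) (auto simp: jump_abs)
  then show ?thesis using s by simp
qed

lemma harm_nstep:
  assumes h: "harm g"
  shows "s \<in> states N \<Longrightarrow> (\<Sum>u\<in>states N. nstep eps gam N n s u * g u) = g s"
proof (induction n arbitrary: s)
  case 0
  have "(\<Sum>u\<in>states N. nstep eps gam N 0 s u * g u) = (\<Sum>u\<in>states N. if s = u then g s else 0)"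
    by (intro sum.cong) auto
  then show ?case using 0 by simp
next
  case (Suc n)
  have "(\<Sum>u\<in>states N. nstep eps gam N (Suc n) s u * g u)
     = (\<Sum>v\<in>states N. jump eps gam N s v * (\<Sum>u\<in>states N. nstep eps gam N n v u * g u))"
    by (simp add: sum_distrib_left sum_distrib_right mult.assoc) (rule sum.swap)
  also have "\<dots> = (\<Sum>v\<in>states N. jump eps gam N s v * g v)"
    using Suc.IH by (intro sum.cong) auto
  also have "\<dots> = g s" by (rule harm_jump[OF h Suc.prems])
  finally show ?case .
qed


lemma nstep_Suc_sum:
  "(\<Sum>u\<in>A. nstep eps gam N (Suc n) s u * f u)
     = (\<Sum>v\<in>states N. jump eps gam N s v * (\<Sum>u\<in>A. nstep eps gam N n v u * f u))"
  by (simp add: sum_distrib_left sum_distrib_right mult.assoc) (rule sum.swap)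

lemma nstep_0_sum: "s \<in> A \<Longrightarrow> finite A \<Longrightarrow> (\<Sum>u\<in>A. nstep eps gam N 0 s u * f u) = f s"
proof -
  assume "s \<in> A" "finite A"
  have "(\<Sum>u\<in>A. nstep eps gam N 0 s u * f u) = (\<Sum>u\<in>A. if s = u then f s else 0)"
    by (intro sum.cong) auto
  then show ?thesis using \<open>s \<in> A\<close> \<open>finite A\<close> by simp
qed

definition w :: "state \<Rightarrow> real" where
  "w s = (case s of S y j \<Rightarrow> real y * (real N + 1 - real y) | _ \<Rightarrow> 0)"

lemma w_nonneg: "s \<in> states N \<Longrightarrow> 0 \<le> w s"
  by (auto simp: w_def states_split trS_def absS_def)

lemma lyap_rate:
  assumes "s \<in> trS N"
  shows "(\<Sum>u\<in>states N. rate eps gam N s u * (w u - w s)) \<le> - eps"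
proof -
  obtain x i where s: "s = S x i" "1 \<le> x" "x \<le> N" "i \<le> 1" using assms by (rule trS_E)
  have e: "(\<Sum>u\<in>states N. rate eps gam N s u * (w u - w s)) =
     (if 1 < x then (if i = 0 then 1 else eps) * (w (S (x-1) i) - w s) else (- w s))
   + (if x < N then (if i = 0 then 1 else eps) * (w (S (x+1) i) - w s) else (- w s))
   + gam * (w (S x (1-i)) - w s)"
    using sum_rate[OF s(2,3,4), of eps gam "\<lambda>u. w u - w s"] s(1) by (simp add: w_def)
  have x1: "real (x - 1) = real x - 1" using s by (simp add: of_nat_diff)
  have m: "eps * (real N - 1) \<le> real N - 1" using eps N2 by (simp add: mult_left_le_one_le)
  show ?thesis unfolding e using s eps N2 m
    by (cases "x = 1"; cases "x = N"; cases "i = 0") (auto simp: w_def x1 algebra_simps)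
qed

definition cc :: real where "cc = eps / (2 + gam)"

lemma cc_pos: "0 < cc" using eps gam by (simp add: cc_def)

lemma lyap_jump:
  assumes s: "s \<in> states N"
  shows "(\<Sum>u\<in>states N. jump eps gam N s u * w u) \<le> w s - cc * (if s \<in> trS N then 1 else 0)"
proof (cases "s \<in> trS N")
  case True
  have Rp: "R s > 0" using R_bounds(1)[OF True] gam by linarith
  have Rl: "R s \<le> 2 + gam" using R_bounds(2)[OF True] .
  have "(\<Sum>u\<in>states N. rate eps gam N s u * (w u - w s)) = (\<Sum>u\<in>states N. rate eps gam N s u * w u) - w s * R s"
    unfolding R_def sum_distrib_left sum_subtractf[symmetric] by (rule sum.cong) (auto simp: algebra_simps)
  with lyap_rate[OF True] have le: "(\<Sum>u\<in>states N. rate eps gam N s u * w u) \<le> w s * R s - eps" by simp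
  have "(\<Sum>u\<in>states N. jump eps gam N s u * w u) = (\<Sum>u\<in>states N. rate eps gam N s u * w u) / R s"
    using True by (simp add: jump_tr sum_divide_distrib[symmetric])
  also have "\<dots> \<le> (w s * R s - eps) / R s" using le Rp by (simp add: divide_right_mono)
  also have "\<dots> = w s - eps / R s" using Rp by (simp add: field_simps)
  also have "\<dots> \<le> w s - cc" unfolding cc_def using Rp Rl eps
    by (simp add: frac_le)
  finally show ?thesis using True by simp
next
  case False
  then have "s \<in> absS" using s by (simp add: states_split)
  then have "(\<Sum>u\<in>states N. jump eps gam N s u * w u) = (\<Sum>u\<in>states N. if s = u then w s else 0)"
    by (intro sum.cong) (auto simp: jump_abs)
  then show ?thesis using s False by simp
qed

definition T :: "nat \<Rightarrow> state \<Rightarrow> real" where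
  "T n s = (\<Sum>u\<in>trS N. nstep eps gam N n s u)"

lemma T_Suc: "T (Suc n) s = (\<Sum>v\<in>states N. jump eps gam N s v * T n v)"
  using nstep_Suc_sum[where A="trS N" and f="\<lambda>_. 1"] by (simp add: T_def)

lemma T_0: "s \<in> states N \<Longrightarrow> T 0 s = (if s \<in> trS N then 1 else 0)"
proof -
  have "T 0 s = (\<Sum>u\<in>trS N. if s = u then 1 else 0)" unfolding T_def by (intro sum.cong) auto
  then show ?thesis by simp
qed

lemma T_nonneg: "0 \<le> T n s" unfolding T_def by (intro sum_nonneg nstep_nonneg)

lemma lyap_bound:
  "s \<in> states N \<Longrightarrow> (\<Sum>u\<in>states N. nstep eps gam N n s u * w u) + cc * (\<Sum>k<n. T k s) \<le> w s"
proof (induction n arbitrary: s)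
  case 0 then show ?case using nstep_0_sum[of s "states N" w] by simp
next
  case (Suc n)
  let ?W = "\<lambda>v. (\<Sum>u\<in>states N. nstep eps gam N n v u * w u)"
  have "(\<Sum>k<n. T (Suc k) s) = (\<Sum>v\<in>states N. jump eps gam N s v * (\<Sum>k<n. T k v))"
    unfolding T_Suc sum_distrib_left by (rule sum.swap)
  then have "(\<Sum>u\<in>states N. nstep eps gam N (Suc n) s u * w u) + cc * (\<Sum>k<Suc n. T k s)
      = cc * T 0 s + (\<Sum>v\<in>states N. jump eps gam N s v * (?W v + cc * (\<Sum>k<n. T k v)))"
    unfolding nstep_Suc_sum sum.lessThan_Suc_shift
    by (simp add: algebra_simps sum.distrib sum_distrib_left)
  also have "\<dots> \<le> cc * T 0 s + (\<Sum>v\<in>states N. jump eps gam N s v * w v)"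
    using Suc.IH by (intro add_left_mono sum_mono mult_left_mono jump_nonneg) auto
  also have "\<dots> \<le> w s" using lyap_jump[OF Suc.prems] T_0[OF Suc.prems] by simp
  finally show ?case .
qed

lemma T_lim: assumes s: "s \<in> states N" shows "(\<lambda>k. T k s) \<longlonglongrightarrow> 0"
proof -
  have "(\<Sum>k<n. T k s) \<le> w s / cc" for n
  proof -
    have "0 \<le> (\<Sum>u\<in>states N. nstep eps gam N n s u * w u)"
      by (intro sum_nonneg mult_nonneg_nonneg nstep_nonneg w_nonneg) 
    with lyap_bound[OF s, of n] have "cc * (\<Sum>k<n. T k s) \<le> w s" by linarith
    then show ?thesis using cc_pos by (simp add: field_simps)
  qed
  then have "summable (\<lambda>k. T k s)" by (intro summableI_nonneg_bounded T_nonneg)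
  then show ?thesis by (rule summable_LIMSEQ_zero)
qed

lemma harm_limit:
  assumes h: "harm g" and s: "s \<in> states N"
  shows "(\<lambda>n. \<Sum>u\<in>absS. nstep eps gam N n s u * g u) \<longlonglongrightarrow> g s"
proof -
  define B where "B = (\<Sum>v\<in>trS N. \<bar>g v\<bar>)"
  have gB: "\<bar>g v\<bar> \<le> B" if "v \<in> trS N" for v
    unfolding B_def using that by (intro member_le_sum) auto
  have eq: "(\<Sum>u\<in>absS. nstep eps gam N n s u * g u) = g s - (\<Sum>u\<in>trS N. nstep eps gam N n s u * g u)" for n
    using harm_nstep[OF h s, of n] by (simp add: sum_states)
  have "(\<lambda>n. \<Sum>u\<in>trS N. nstep eps gam N n s u * g u) \<longlonglongrightarrow> 0"
  proof (rule Lim_null_comparison)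
    show "\<forall>\<^sub>F n in sequentially. norm (\<Sum>u\<in>trS N. nstep eps gam N n s u * g u) \<le> B * T n s"
    proof (intro always_eventually allI)
      fix n
      have "norm (\<Sum>u\<in>trS N. nstep eps gam N n s u * g u) \<le> (\<Sum>u\<in>trS N. \<bar>nstep eps gam N n s u * g u\<bar>)"
        by (simp add: sum_abs)
      also have "\<dots> \<le> (\<Sum>u\<in>trS N. nstep eps gam N n s u * B)"
        using gB nstep_nonneg by (intro sum_mono) (simp add: abs_mult mult_left_mono)
      also have "\<dots> = B * T n s" unfolding T_def sum_distrib_left by (simp add: mult.commute)
      finally show "norm (\<Sum>u\<in>trS N. nstep eps gam N n s u * g u) \<le> B * T n s" .
    qed
    show "(\<lambda>n. B * T n s) \<longlonglongrightarrow> 0" using T_lim[OF s] by (simp add: tendsto_mult_right_zero)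
  qed
  then have "(\<lambda>n. g s - (\<Sum>u\<in>trS N. nstep eps gam N n s u * g u)) \<longlonglongrightarrow> g s - 0"
    by (intro tendsto_intros)
  then show ?thesis unfolding eq by simp
qed


abbreviation "a1 \<equiv> alpha1 eps gam"
abbreviation "a2 \<equiv> alpha2 eps gam"

lemma alpha_facts:
  "a1 * a2 = 1" "a1 < a2" "0 < a1" "0 < a2"
  "eps * a1^2 - (gam * (1 + eps) + 2 * eps) * a1 + eps = 0"
  "eps * a2^2 - (gam * (1 + eps) + 2 * eps) * a2 + eps = 0"
proof -
  define k where "k = 1 + gam/2 * (1 + 1/eps)"
  have k1: "k > 1" using eps gam by (simp add: k_def add_pos_pos)
  have d: "k^2 - 1 > 0" using k1 by (simp add: power2_eq_square) (metis less_1_mult)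
  define r where "r = sqrt (k^2 - 1)"
  have r: "r > 0" "r^2 = k^2 - 1" using d by (auto simp: r_def)
  have A1: "a1 = k - r" and A2: "a2 = k + r" by (simp_all add: alpha1_def alpha2_def k_def r_def)
  show p: "a1 * a2 = 1" unfolding A1 A2 using r by (simp add: algebra_simps power2_eq_square)
  show "a1 < a2" unfolding A1 A2 using r by simp
  show "0 < a2" unfolding A2 using r k1 by simp
  then show "0 < a1" using p by (metis zero_less_mult_pos2 zero_less_one)
  have kk: "2 * k * eps = gam * (1 + eps) + 2 * eps" using eps by (simp add: k_def field_simps)
  have q1: "a1^2 - 2 * k * a1 + 1 = 0" unfolding A1 using r by (simp add: algebra_simps power2_eq_square)
  have q2: "a2^2 - 2 * k * a2 + 1 = 0" unfolding A2 using r by (simp add: algebra_simps power2_eq_square)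
  show "eps * a1^2 - (gam * (1 + eps) + 2 * eps) * a1 + eps = 0"
    unfolding kk[symmetric] using arg_cong[OF q1, of "\<lambda>t. eps * t"] by (simp add: algebra_simps)
  show "eps * a2^2 - (gam * (1 + eps) + 2 * eps) * a2 + eps = 0"
    unfolding kk[symmetric] using arg_cong[OF q2, of "\<lambda>t. eps * t"] by (simp add: algebra_simps)
qed

definition P :: "real^4 \<Rightarrow> nat \<Rightarrow> real" where
  "P a z = a$1 * real z + a$2 + eps * (a$3 * a1^z + a$4 * a2^z)"
definition Q :: "real^4 \<Rightarrow> nat \<Rightarrow> real" where
  "Q a z = a$1 * real z + a$2 - (a$3 * a1^z + a$4 * a2^z)"

definition gfun :: "real^4 \<Rightarrow> state \<Rightarrow> real" where
  "gfun a s = (case s of S y j \<Rightarrow> (if j = 0 then P a y else Q a y)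
     | Lst j \<Rightarrow> (if j = 0 then P a 0 else (1 - eps) * Q a 1 + eps * Q a 0)
     | Rst j \<Rightarrow> (if j = 0 then P a (N+1) else (1 - eps) * Q a N + eps * Q a (N+1)))"

lemma recP: "P a z + P a (Suc (Suc z)) - 2 * P a (Suc z) + gam * (Q a (Suc z) - P a (Suc z)) = 0"
proof -
  have "P a z + P a (Suc (Suc z)) - 2 * P a (Suc z) + gam * (Q a (Suc z) - P a (Suc z))
    = a$3 * a1^z * (eps * a1^2 - (gam * (1 + eps) + 2 * eps) * a1 + eps)
    + a$4 * a2^z * (eps * a2^2 - (gam * (1 + eps) + 2 * eps) * a2 + eps)"
    by (simp add: P_def Q_def algebra_simps power2_eq_square)
  then show ?thesis using alpha_facts by simp
qed

lemma recQ: "eps * (Q a z + Q a (Suc (Suc z)) - 2 * Q a (Suc z)) + gam * (P a (Suc z) - Q a (Suc z)) = 0"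
proof -
  have "eps * (Q a z + Q a (Suc (Suc z)) - 2 * Q a (Suc z)) + gam * (P a (Suc z) - Q a (Suc z))
    = - a$3 * a1^z * (eps * a1^2 - (gam * (1 + eps) + 2 * eps) * a1 + eps)
      - a$4 * a2^z * (eps * a2^2 - (gam * (1 + eps) + 2 * eps) * a2 + eps)"
    by (simp add: P_def Q_def algebra_simps power2_eq_square)
  then show ?thesis using alpha_facts by simp
qed

lemma harm_g: "harm (gfun a)"
  unfolding harm_def
proof
  fix s assume "s \<in> trS N"
  then obtain x i where s: "s = S x i" "1 \<le> x" "x \<le> N" "i \<le> 1" by (rule trS_E)
  obtain z where z: "x = Suc z" using s by (cases x) auto
  show "(\<Sum>u\<in>states N. rate eps gam N s u * (gfun a u - gfun a s)) = 0"
  proof (cases "i = 0")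
    case True
    have "(\<Sum>u\<in>states N. rate eps gam N s u * (gfun a u - gfun a s)) =
       P a z + P a (Suc (Suc z)) - 2 * P a (Suc z) + gam * (Q a (Suc z) - P a (Suc z))"
      using sum_rate[OF s(2,3,4), of eps gam "\<lambda>u. gfun a u - gfun a s"] s True z
      by (cases "z = 0"; cases "Suc z = N") (auto simp: gfun_def)
    then show ?thesis using recP by simp
  next
    case False
    then have i1: "i = 1" using s by simp
    have "(\<Sum>u\<in>states N. rate eps gam N s u * (gfun a u - gfun a s)) =
       eps * (Q a z + Q a (Suc (Suc z)) - 2 * Q a (Suc z)) + gam * (P a (Suc z) - Q a (Suc z))"
      using sum_rate[OF s(2,3,4), of eps gam "\<lambda>u. gfun a u - gfun a s"] s i1 z
      by (cases "z = 0"; cases "Suc z = N") (auto simp: gfun_def algebra_simps)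
    then show ?thesis using recQ by simp
  qed
qed


lemma Mv:
  "(Meps eps gam N *v a) $ 1 = a$2 + eps * a$3 + eps * a$4"
  "(Meps eps gam N *v a) $ 2 = (1 - eps) * a$1 + a$2 + ((eps - 1) * a1 - eps) * a$3 + ((eps - 1) * a2 - eps) * a$4"
  "(Meps eps gam N *v a) $ 3 = (real N + 1) * a$1 + a$2 + eps * a1 ^ (N+1) * a$3 + eps * a2 ^ (N+1) * a$4"
  "(Meps eps gam N *v a) $ 4 = (real N + eps) * a$1 + a$2 - a1 ^ N * (eps * a1 + 1 - eps) * a$3
   - a2 ^ N * (eps * a2 + 1 - eps) * a$4"
  by (simp_all add: Meps_def matrix_vector_mult_def sum_4 sel4_def Let_def)

lemma target_vals: "target 1 = Lst 0" "target 2 = Lst 1" "target 3 = Rst 0" "target 4 = Rst 1"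
  by (simp_all add: target_def sel4_def)

lemma gS: "gfun a (S x 0) = a$1 * real x + a$2 + eps * (a$3 * a1^x + a$4 * a2^x)"
  "gfun a (S x 1) = a$1 * real x + a$2 - (a$3 * a1^x + a$4 * a2^x)"
  by (simp_all add: gfun_def P_def Q_def)

lemma gfun_target: "gfun a (target r) = (Meps eps gam N *v a) $ r"
proof -
  have "\<forall>r::4. gfun a (target r) = (Meps eps gam N *v a) $ r"
    unfolding forall_4 target_vals Mv
    by (simp add: gfun_def P_def Q_def algebra_simps)
  then show ?thesis by blast
qed

lemma absS_range: "absS = range target"
  by (simp add: UNIV_4 target_vals absS_def)

lemma inj_target: "inj target"
proof -
  have "\<forall>r r'::4. target r = target r' \<longrightarrow> r = r'"
    unfolding forall_4 target_vals by simp
  then show ?thesis by (auto simp: inj_def)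
qed

lemma zero_from_PQ:
  assumes "P d 1 = 0" "P d 2 = 0" "Q d 1 = 0" "Q d 2 = 0"
  shows "d = 0"
proof -
  have e: "P d z + eps * Q d z = (1 + eps) * (d$1 * real z + d$2)" for z
    by (simp add: P_def Q_def algebra_simps)
  have f: "P d z - Q d z = (1 + eps) * (d$3 * a1^z + d$4 * a2^z)" for z
    by (simp add: P_def Q_def algebra_simps)
  have ne: "1 + eps \<noteq> 0" using eps by simp
  have e1: "d$1 + d$2 = 0" using e[of 1] assms ne by simp
  have e2: "2 * d$1 + d$2 = 0" using e[of 2] assms ne by simp
  have f1: "d$3 * a1 + d$4 * a2 = 0" using f[of 1] assms ne by simp
  have f2: "d$3 * a1^2 + d$4 * a2^2 = 0" using f[of 2] assms ne by simp
  have "d$3 * a1 * (a1 - a2) = 0"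
  proof -
    have "d$3 * a1 * (a1 - a2) = (d$3 * a1^2 + d$4 * a2^2) - a2 * (d$3 * a1 + d$4 * a2)"
      by (simp add: algebra_simps power2_eq_square)
    then show ?thesis using f1 f2 by simp
  qed
  then have d3: "d$3 = 0" using alpha_facts by auto
  then have d4: "d$4 = 0" using f1 alpha_facts by auto
  have d1: "d$1 = 0" "d$2 = 0" using e1 e2 by auto
  show ?thesis unfolding vec_eq_iff forall_4 using d1 d3 d4 by simp
qed

lemma gfun_zero_on_tr:
  assumes "Meps eps gam N *v d = 0" "s \<in> trS N"
  shows "gfun d s = 0"
proof -
  have sN: "s \<in> states N" using assms by (simp add: states_split)
  have z: "\<forall>u\<in>absS. gfun d u = 0" using assms(1) unfolding absS_range
    by (auto simp: gfun_target)
  have "(\<lambda>n. \<Sum>u\<in>absS. nstep eps gam N n s u * gfun d u) \<longlonglongrightarrow> gfun d s"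
    by (rule harm_limit[OF harm_g sN])
  moreover have "(\<lambda>n. \<Sum>u\<in>absS. nstep eps gam N n s u * gfun d u) = (\<lambda>n. 0)"
    using z by simp
  ultimately show ?thesis using LIMSEQ_unique tendsto_const by metis
qed

lemma Minv: "invertible (Meps eps gam N)"
proof -
  have "inj ((*v) (Meps eps gam N))"
  proof (rule injI)
    fix a b assume ab: "Meps eps gam N *v a = Meps eps gam N *v b"
    define d where "d = a - b"
    have M0: "Meps eps gam N *v d = 0" using ab by (simp add: d_def matrix_vector_mult_diff_distrib)
    have t: "S 1 0 \<in> trS N" "S 2 0 \<in> trS N" "S 1 1 \<in> trS N" "S 2 1 \<in> trS N"
      using N2 by (auto simp: trS_iff)
    have "P d 1 = 0" "P d 2 = 0" "Q d 1 = 0" "Q d 2 = 0"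
      using gfun_zero_on_tr[OF M0 t(1)] gfun_zero_on_tr[OF M0 t(2)]
        gfun_zero_on_tr[OF M0 t(3)] gfun_zero_on_tr[OF M0 t(4)] by (simp_all add: gfun_def)
    then have "d = 0" by (rule zero_from_PQ)
    then show "a = b" by (simp add: d_def)
  qed
  then show ?thesis
    using invertible_left_inverse matrix_left_invertible_injective by blast
qed

end

lemma matrix_inv_right':
  fixes A :: "real^'n^'n"
  assumes "invertible A" shows "A ** matrix_inv A = mat 1"
  using assms unfolding invertible_def matrix_inv_def by (rule someI2_ex) auto


context
  fixes eps gam :: real and N :: nat
  assumes eps: "0 < eps" "eps \<le> 1" and gam: "0 < gam" and N2: "2 \<le> N"
begin

lemma main_in:
  assumes x: "x \<in> {1..N}"
  shows "pvec eps gam N 0 x = real x *\<^sub>R cvec eps gam N 1 + cvec eps gam N 2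
        + eps *\<^sub>R ((alpha1 eps gam ^ x) *\<^sub>R cvec eps gam N 3 + (alpha2 eps gam ^ x) *\<^sub>R cvec eps gam N 4)
    \<and> pvec eps gam N 1 x = real x *\<^sub>R cvec eps gam N 1 + cvec eps gam N 2
        - ((alpha1 eps gam ^ x) *\<^sub>R cvec eps gam N 3 + (alpha2 eps gam ^ x) *\<^sub>R cvec eps gam N 4)"
proof -
  note ctx = eps gam N2
  let ?M = "Meps eps gam N"
  have inv: "invertible ?M" by (rule Minv[OF ctx])
  define am where "am m = matrix_inv ?M *v axis m 1" for m :: 4
  have Mam: "?M *v am m = axis m 1" for m
    unfolding am_def matrix_vector_mul_assoc matrix_inv_right'[OF inv] by simp
  have amc: "am m $ k = cvec eps gam N k $ m" for m k
    by (simp add: am_def cvec_def matrix_vector_mult_def axis_def transpose_def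
        if_distrib[of "\<lambda>t. _ * t"] cong: if_cong)
  have ph: "p_hat eps gam N (S x i) (target m) = gfun eps gam N (am m) (S x i)" if i: "i \<le> 1" for i m
  proof -
    let ?s = "S x i"
    have sN: "?s \<in> states N" using x i by (simp add: states_split trS_iff)
    have gabs: "gfun eps gam N (am m) u = (if u = target m then 1 else 0)" if "u \<in> absS" for u
    proof -
      obtain r where r: "u = target r" using \<open>u \<in> absS\<close> absS_range[OF ctx] by auto
      have "gfun eps gam N (am m) u = axis m 1 $ r" unfolding r gfun_target[OF ctx] Mam ..
      also have "\<dots> = (if u = target m then 1 else 0)"
        using inj_target[OF ctx, THEN injD] by (auto simp: axis_def r)
      finally show ?thesis .
    qed
    have tm: "target m \<in> absS" by (simp add: absS_range[OF ctx])
    have "(\<lambda>n. \<Sum>u\<in>absS. nstep eps gam N n ?s u * gfun eps gam N (am m) u) = (\<lambda>n. nstep eps gam N n ?s (target m))"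
    proof
      fix n
      have "(\<Sum>u\<in>absS. nstep eps gam N n ?s u * gfun eps gam N (am m) u)
          = (\<Sum>u\<in>absS. if u = target m then nstep eps gam N n ?s (target m) else 0)"
        using gabs by (intro sum.cong) auto
      also have "\<dots> = nstep eps gam N n ?s (target m)" using tm by simp
      finally show "(\<Sum>u\<in>absS. nstep eps gam N n ?s u * gfun eps gam N (am m) u) = nstep eps gam N n ?s (target m)" .
    qed
    with harm_limit[OF ctx harm_g[OF ctx, of "am m"] sN]
    have "(\<lambda>n. nstep eps gam N n ?s (target m)) \<longlonglongrightarrow> gfun eps gam N (am m) ?s" by metis
    then show ?thesis unfolding p_hat_def by (rule limI)
  qed
  show ?thesis
    using ph[of 0] ph[of 1] unfolding gS[OF ctx]
    by (auto simp: vec_eq_iff pvec_def amc algebra_simps)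
qed

end

theorem mainTheorem6:
  fixes eps gam :: real and N :: nat
  assumes "0 < eps" "eps \<le> 1" "0 < gam" "2 \<le> N"
  shows "invertible (Meps eps gam N) \<and>
    (\<forall>x\<in>{1..N}.
      pvec eps gam N 0 x = real x *\<^sub>R cvec eps gam N 1 + cvec eps gam N 2
        + eps *\<^sub>R ((alpha1 eps gam ^ x) *\<^sub>R cvec eps gam N 3 + (alpha2 eps gam ^ x) *\<^sub>R cvec eps gam N 4)
    \<and> pvec eps gam N 1 x = real x *\<^sub>R cvec eps gam N 1 + cvec eps gam N 2
        - ((alpha1 eps gam ^ x) *\<^sub>R cvec eps gam N 3 + (alpha2 eps gam ^ x) *\<^sub>R cvec eps gam N 4))"
  using Minv[OF assms] main_in[OF assms] by blast

end
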